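(* Let $r$ be a positive integer with $r\le n_i$ for all $i$, and let $T=\sum_{j=1}^r e_1^j\otimes\cdots\otimes e_d^j$. The stabilizer $H=\{g\in G: g\cdot T=T\}$ consists exactly of the elements $$h = \begin{bmatrix} D_1Q & M_1\\ 0 & A_1\end{bmatrix}\times\cdots\times\begin{bmatrix} D_dQ & M_d\\ 0 & A_d\end{bmatrix}$$ (block sizes $r$ and $n_i-r$), where $D_1,\dots,D_d$ are invertible diagonal $r\times r$ matrices with $D_1D_2\cdots D_d=I$, $Q$ is an $r\times r$ permutation matrix (the same in every factor), the $A_i$ are invertible $(n_i-r)\times(n_i-r)$ matrices, and the $M_i$ are arbitrary $r\times(n_i-r)$ matrices.
   Context: Fix integers $d\ge 3$ and $n_1,\dots,n_d\ge 2$. $V=\mathbb{R}^{n_1}\otimes\cdots\otimes\mathbb{R}^{n_d}$, and $G=\mathrm{GL}(n_1)\times\cdots\times\mathrm{GL}(n_d)$ (real invertible matrices) acts on $V$ by $(g_1,\dots,g_d)\cdot(v_1\otimes\cdots\otimes v_d)=(g_1v_1)\otimes\cdots\otimes(g_dv_d)$, extended linearly. $e_i^1,\dots,e_i^{n_i}$ is the standard basis of $\mathbb{R}^{n_i}$. *)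

theory Defs
  imports "Jordan_Normal_Form.Matrix" "HOL-Combinatorics.Permutations"
begin

text \<open>Multi-indices of the tensor space R^{n_0} (x) ... (x) R^{n_{d-1}} (0-based).\<close>
definition tidx :: "nat \<Rightarrow> (nat \<Rightarrow> nat) \<Rightarrow> (nat \<Rightarrow> nat) set" where
  "tidx d n = PiE {..<d} (\<lambda>i. {..<n i})"

text \<open>Tensors are coefficient functions on multi-indices w.r.t. the basis e^{a_0} (x) ... (x) e^{a_{d-1}}.
  Action of g = (g_0,...,g_{d-1}) in GL(n_0) x ... x GL(n_{d-1}).\<close>
definition tact :: "nat \<Rightarrow> (nat \<Rightarrow> nat) \<Rightarrow> (nat \<Rightarrow> real mat) \<Rightarrow> ((nat \<Rightarrow> nat) \<Rightarrow> real)
    \<Rightarrow> ((nat \<Rightarrow> nat) \<Rightarrow> real)" where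
  "tact d n g T = (\<lambda>a. \<Sum>b\<in>tidx d n. (\<Prod>i<d. g i $$ (a i, b i)) * T b)"

definition diag_tensor :: "nat \<Rightarrow> nat \<Rightarrow> (nat \<Rightarrow> nat) \<Rightarrow> real" where
  "diag_tensor d r = (\<lambda>a. if \<exists>j<r. \<forall>i<d. a i = j then 1 else 0)"

definition permutation_mat :: "nat \<Rightarrow> real mat \<Rightarrow> bool" where
  "permutation_mat r Q \<longleftrightarrow> Q \<in> carrier_mat r r \<and>
     (\<exists>\<sigma>. \<sigma> permutes {..<r} \<and> (\<forall>i<r. \<forall>j<r. Q $$ (i, j) = (if \<sigma> j = i then 1 else 0)))"

end

theory Submission
  imports Defs "Jordan_Normal_Form.Determinant"
begin

lemma sum_diag:
  assumes d: "d \<ge> 1" and rn: "\<forall>i<d. r \<le> n i"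
  shows "(\<Sum>b\<in>tidx d n. F b * diag_tensor d r b) = (\<Sum>k<r. F (\<lambda>i. if i<d then k else undefined))"
proof -
  define c where "c = (\<lambda>k::nat. \<lambda>i::nat. if i<d then k else undefined)"
  have fin: "finite (tidx d n)" unfolding tidx_def by (intro finite_PiE) auto
  have S: "{b\<in>tidx d n. diag_tensor d r b \<noteq> 0} = c ` {..<r}"
  proof
    show "{b\<in>tidx d n. diag_tensor d r b \<noteq> 0} \<subseteq> c ` {..<r}"
    proof
      fix b assume b: "b \<in> {b\<in>tidx d n. diag_tensor d r b \<noteq> 0}"
      then obtain j where j: "j<r" "\<forall>i<d. b i = j" unfolding diag_tensor_def by (auto split: if_splits)
      have "b = c j"
      proof
        fix i show "b i = c j i"
          using b j unfolding c_def tidx_def by (cases "i<d") (auto simp: PiE_def extensional_def)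
      qed
      then show "b \<in> c ` {..<r}" using j by auto
    qed
    show "c ` {..<r} \<subseteq> {b\<in>tidx d n. diag_tensor d r b \<noteq> 0}"
    proof
      fix b assume "b \<in> c ` {..<r}"
      then obtain k where k: "k<r" "b = c k" by auto
      have "b \<in> tidx d n" using k rn unfolding tidx_def c_def by (auto simp: PiE_def extensional_def)
      moreover have "diag_tensor d r b \<noteq> 0" using k unfolding diag_tensor_def c_def by auto
      ultimately show "b \<in> {b\<in>tidx d n. diag_tensor d r b \<noteq> 0}" by auto
    qed
  qed
  have "(\<Sum>b\<in>tidx d n. F b * diag_tensor d r b) = (\<Sum>b\<in>{b\<in>tidx d n. diag_tensor d r b \<noteq> 0}. F b * diag_tensor d r b)"
    by (rule sum.mono_neutral_right[OF fin]) auto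
  also have "\<dots> = (\<Sum>b\<in>c ` {..<r}. F b * diag_tensor d r b)" using S by simp
  also have "\<dots> = (\<Sum>k<r. F (c k) * diag_tensor d r (c k))"
  proof (rule sum.reindex[unfolded comp_def])
    show "inj_on c {..<r}"
    proof
      fix x y assume "c x = c y" then have "c x 0 = c y 0" by simp
      then show "x = y" using d unfolding c_def by auto
    qed
  qed
  also have "\<dots> = (\<Sum>k<r. F (c k))"
    by (rule sum.cong) (auto simp: diag_tensor_def c_def)
  finally show ?thesis unfolding c_def .
qed

lemma tact_diag:
  assumes d: "d \<ge> 1" and rn: "\<forall>i<d. r \<le> n i"
  shows "tact d n g (diag_tensor d r) a = (\<Sum>j<r. \<Prod>i<d. g i $$ (a i, j))"
  unfolding tact_def
  by (subst sum_diag[OF d rn]) (auto intro!: sum.cong prod.cong)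

lemma star:
  assumes d: "d \<ge> 1" and rn: "\<forall>i<d. r \<le> n i"
    and stab: "\<forall>a\<in>tidx d n. tact d n g (diag_tensor d r) a = diag_tensor d r a"
  shows "(\<Sum>j<r. \<Prod>i<d. \<Sum>x<n i. \<phi> i x * g i $$ (x,j)) = (\<Sum>k<r. \<Prod>i<d. \<phi> i k)"
proof -
  have "(\<Sum>a\<in>tidx d n. (\<Prod>i<d. \<phi> i (a i)) * diag_tensor d r a) = (\<Sum>k<r. \<Prod>i<d. \<phi> i k)"
    by (subst sum_diag[OF d rn]) (auto intro!: sum.cong prod.cong)
  moreover have "(\<Sum>a\<in>tidx d n. (\<Prod>i<d. \<phi> i (a i)) * diag_tensor d r a)
     = (\<Sum>a\<in>tidx d n. (\<Prod>i<d. \<phi> i (a i)) * (\<Sum>j<r. \<Prod>i<d. g i $$ (a i, j)))"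
    using stab by (auto simp: tact_diag[OF d rn, symmetric] intro!: sum.cong)
  moreover have "\<dots> = (\<Sum>j<r. \<Sum>a\<in>tidx d n. \<Prod>i<d. \<phi> i (a i) * g i $$ (a i, j))"
    by (simp add: sum_distrib_left prod.distrib sum.swap[of _ "tidx d n"])
  moreover have "\<dots> = (\<Sum>j<r. \<Prod>i<d. \<Sum>x<n i. \<phi> i x * g i $$ (x,j))"
    unfolding tidx_def by (intro sum.cong refl prod_sum_PiE[symmetric]) auto
  ultimately show ?thesis by simp
qed


lemma inv_ex:
  assumes A: "A \<in> carrier_mat n n" and inv: "invertible_mat A"
  shows "\<exists>B. B \<in> carrier_mat n n \<and> A * B = 1\<^sub>m n \<and> B * A = 1\<^sub>m n"
proof -
  from inv obtain B where 1: "A * B = 1\<^sub>m (dim_row A)" and 2: "B * A = 1\<^sub>m (dim_row B)"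
    unfolding invertible_mat_def inverts_mat_def by auto
  have "dim_col B = n" using arg_cong[OF 1, of dim_col] A by simp
  moreover have "dim_row B = n" using arg_cong[OF 2, of dim_col] A by simp
  ultimately show ?thesis using 1 2 A by auto
qed

lemma inv_det:
  assumes A: "A \<in> carrier_mat n n" and inv: "invertible_mat A"
  shows "det A \<noteq> (0::real)"
proof -
  obtain B where B: "B \<in> carrier_mat n n" "A * B = 1\<^sub>m n" using inv_ex[OF A inv] by auto
  have "det A * det B = 1" using det_mult[OF A B(1)] B(2) by simp
  then show ?thesis by auto
qed

lemma det_inv:
  assumes A: "A \<in> carrier_mat n n" and dA: "det A \<noteq> (0::real)"
  shows "invertible_mat A"
proof -
  have "A \<in> Units (ring_mat TYPE(real) n ())" by (rule det_non_zero_imp_unit[OF A dA])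
  then obtain B where B: "B \<in> carrier_mat n n" "B * A = 1\<^sub>m n" "A * B = 1\<^sub>m n"
    unfolding Units_def ring_mat_simps by auto
  show ?thesis unfolding invertible_mat_def inverts_mat_def square_mat.simps
    using A B by (intro conjI exI[of _ B]) auto
qed

lemma mult_entry:
  assumes "A \<in> carrier_mat n n" "B \<in> carrier_mat n n" "i < n" "j < n"
  shows "(A * B) $$ (i,j) = (\<Sum>x<n. A $$ (i,x) * B $$ (x,j))"
  using assms by (simp add: scalar_prod_def lessThan_atLeast0)

lemma keyK:
  assumes d: "d \<ge> 1" and rn: "\<forall>i<d. r \<le> n i"
    and stab: "\<forall>a\<in>tidx d n. tact d n g (diag_tensor d r) a = diag_tensor d r a"
    and g: "\<forall>i<d. g i \<in> carrier_mat (n i) (n i)"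
    and h: "\<forall>i<d. h i \<in> carrier_mat (n i) (n i) \<and> h i * g i = 1\<^sub>m (n i)"
    and m: "m < d" and a: "a < n m" and J: "\<forall>i<d. i \<noteq> m \<longrightarrow> J i < n i"
  shows "(\<Sum>j<r. g m $$ (a,j) * (\<Prod>i\<in>{..<d}-{m}. if J i = j then 1 else 0))
       = (if a < r then (\<Prod>i\<in>{..<d}-{m}. h i $$ (J i, a)) else 0)"
proof -
  define \<phi> where "\<phi> = (\<lambda>i x. if i = m then (if x = a then 1 else 0) else h i $$ (J i, x))"
  have st: "(\<Sum>j<r. \<Prod>i<d. \<Sum>x<n i. \<phi> i x * g i $$ (x,j)) = (\<Sum>k<r. \<Prod>i<d. \<phi> i k)"
    by (rule star[OF d rn stab])
  have L: "(\<Prod>i<d. \<Sum>x<n i. \<phi> i x * g i $$ (x,j)) = g m $$ (a,j) * (\<Prod>i\<in>{..<d}-{m}. if J i = j then 1 else 0)"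
    if j: "j < r" for j
  proof -
    have "(\<Prod>i<d. \<Sum>x<n i. \<phi> i x * g i $$ (x,j)) = (\<Sum>x<n m. \<phi> m x * g m $$ (x,j)) *
        (\<Prod>i\<in>{..<d}-{m}. \<Sum>x<n i. \<phi> i x * g i $$ (x,j))"
      using m by (subst prod.remove[of _ m]) auto
    also have "(\<Sum>x<n m. \<phi> m x * g m $$ (x,j)) = g m $$ (a,j)"
    proof -
      have "(\<Sum>x<n m. \<phi> m x * g m $$ (x,j)) = (\<Sum>x<n m. if x = a then g m $$ (x,j) else 0)"
        by (rule sum.cong) (auto simp: \<phi>_def)
      then show ?thesis using a by simp
    qed
    also have "(\<Prod>i\<in>{..<d}-{m}. \<Sum>x<n i. \<phi> i x * g i $$ (x,j)) = (\<Prod>i\<in>{..<d}-{m}. if J i = j then 1 else 0)"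
    proof (rule prod.cong[OF refl])
      fix i assume i: "i \<in> {..<d}-{m}"
      then have "(\<Sum>x<n i. \<phi> i x * g i $$ (x,j)) = (h i * g i) $$ (J i, j)"
        using h g J rn j unfolding \<phi>_def by (subst mult_entry[of _ "n i"]) auto
      also have "\<dots> = (if J i = j then 1 else 0)" using h i J rn j by auto
      finally show "(\<Sum>x<n i. \<phi> i x * g i $$ (x,j)) = (if J i = j then 1 else 0)" .
    qed
    finally show ?thesis .
  qed
  have R: "(\<Prod>i<d. \<phi> i k) = (if k = a then (\<Prod>i\<in>{..<d}-{m}. h i $$ (J i, a)) else 0)" for k
  proof -
    have "(\<Prod>i<d. \<phi> i k) = \<phi> m k * (\<Prod>i\<in>{..<d}-{m}. \<phi> i k)"
      using m by (subst prod.remove[of _ m]) auto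
    also have "(\<Prod>i\<in>{..<d}-{m}. \<phi> i k) = (\<Prod>i\<in>{..<d}-{m}. h i $$ (J i, k))"
      unfolding \<phi>_def by (rule prod.cong) auto
    finally show ?thesis unfolding \<phi>_def by auto
  qed
  have "(\<Sum>k<r. \<Prod>i<d. \<phi> i k) = (if a < r then (\<Prod>i\<in>{..<d}-{m}. h i $$ (J i, a)) else 0)"
    unfolding R by (simp add: sum.delta')
  with st L show ?thesis by simp
qed


lemma structure_lemma:
  assumes d: "d \<ge> 3" and rn: "\<forall>i<d. r \<le> n i"
    and stab: "\<forall>a\<in>tidx d n. tact d n g (diag_tensor d r) a = diag_tensor d r a"
    and g: "\<forall>i<d. g i \<in> carrier_mat (n i) (n i)"
    and h: "\<forall>i<d. h i \<in> carrier_mat (n i) (n i) \<and> h i * g i = 1\<^sub>m (n i) \<and> g i * h i = 1\<^sub>m (n i)"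
  shows "\<exists>\<tau>. (\<forall>a<r. \<tau> a < r) \<and> inj_on \<tau> {..<r} \<and>
            (\<forall>m<d. \<forall>a<n m. \<forall>j<r. (g m $$ (a,j) \<noteq> 0 \<longleftrightarrow> a < r \<and> j = \<tau> a))"
proof -
  have d1: "d \<ge> 1" using d by simp
  have h1: "\<forall>i<d. h i \<in> carrier_mat (n i) (n i) \<and> h i * g i = 1\<^sub>m (n i)" using h by auto
  note K = keyK[OF d1 rn stab g h1]
  have L3: "(\<Prod>i\<in>{..<d}-{m}. h i $$ (J i, a)) = 0"
    if m: "m < d" and a: "a < r" and J: "\<forall>i<d. i \<noteq> m \<longrightarrow> J i < n i"
      and pq: "p \<in> {..<d}-{m}" "q \<in> {..<d}-{m}" "J p \<noteq> J q" for m a J p q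
  proof -
    have an: "a < n m" using a rn m by auto
    have z: "(\<Prod>i\<in>{..<d}-{m}. if J i = j then 1 else 0) = (0::real)" for j
    proof -
      have "\<exists>k\<in>{..<d}-{m}. J k \<noteq> j" using pq by (cases "J p = j") (metis DiffI, metis DiffI)
      then show ?thesis by (subst prod_zero_iff) auto
    qed
    have "(\<Sum>j<r. g m $$ (a,j) * (\<Prod>i\<in>{..<d}-{m}. if J i = j then 1 else 0)) = 0"
      by (rule sum.neutral) (simp only: z mult_zero_right, simp)
    then show ?thesis using K[OF m an J] a by simp
  qed
  have col: "\<exists>t<n i. h i $$ (t,a) \<noteq> 0" if i: "i < d" and a: "a < n i" for i a
  proof (rule ccontr)
    assume "\<not> ?thesis"
    then have "(\<Sum>x<n i. g i $$ (a,x) * h i $$ (x,a)) = 0" by auto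
    moreover have "(g i * h i) $$ (a,a) = (\<Sum>x<n i. g i $$ (a,x) * h i $$ (x,a))"
      using g h i a by (intro mult_entry) auto
    moreover have "(g i * h i) $$ (a,a) = 1" using h i a by auto
    ultimately show False by simp
  qed
  define s where "s = (\<lambda>i a. SOME t. t < n i \<and> h i $$ (t,a) \<noteq> 0)"
  have s: "s i a < n i \<and> h i $$ (s i a, a) \<noteq> 0" if "i < d" "a < n i" for i a
    unfolding s_def by (rule someI_ex) (use col[OF that] in auto)
  have C: "t = t'" if ii: "i < d" "i' < d" "i \<noteq> i'" and a: "a < r" and t: "t < n i" "t' < n i'"
     and nz: "h i $$ (t,a) \<noteq> 0" "h i' $$ (t',a) \<noteq> 0" for i i' a t t'
  proof (rule ccontr)
    assume ne: "t \<noteq> t'"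
    obtain m where m: "m < d" "m \<noteq> i" "m \<noteq> i'"
    proof -
      have "\<exists>m\<in>{0,1,2::nat}. m \<noteq> i \<and> m \<noteq> i'" using ii(3) by auto
      then obtain m where "m \<in> {0,1,2::nat}" "m \<noteq> i" "m \<noteq> i'" by blast
      then show ?thesis using d by (intro that[of m]) auto
    qed
    define J where "J = (\<lambda>k. if k = i then t else if k = i' then t' else s k a)"
    have J: "\<forall>k<d. k \<noteq> m \<longrightarrow> J k < n k" using t s a rn unfolding J_def by auto
    have "(\<Prod>k\<in>{..<d}-{m}. h k $$ (J k, a)) = 0"
      by (rule L3[OF m(1) a J, of i i']) (use ii m ne in \<open>auto simp: J_def\<close>)
    moreover have "(\<Prod>k\<in>{..<d}-{m}. h k $$ (J k, a)) \<noteq> 0"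
      using nz s a rn by (subst prod_zero_iff) (auto simp: J_def)
    ultimately show False by simp
  qed
  define \<tau> where "\<tau> = (\<lambda>a. s 0 a)"
  have T1: "t = \<tau> a" if i: "i < d" and a: "a < r" and t: "t < n i" and nz: "h i $$ (t,a) \<noteq> 0" for i a t
  proof (cases "i = 0")
    case True
    have "1 < d" using d by simp
    have a0: "a < n 0" "a < n 1" using a rn[rule_format, of 0] rn[rule_format, of 1] d by auto
    have "t = s 1 a" using C[OF i \<open>1<d\<close> _ a t _ nz] s[OF \<open>1<d\<close> a0(2)] True by auto
    moreover have "s 0 a = s 1 a" using C[of 0 1 a] s[OF _ a0(1)] s[OF \<open>1<d\<close> a0(2)] \<open>1<d\<close> a by auto
    ultimately show ?thesis unfolding \<tau>_def by simp
  next
    case False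
    have a0: "a < n 0" using a rn[rule_format, of 0] rn[rule_format, of 1] d by auto
    show ?thesis using C[OF i _ False a t _ nz, of "s 0 a"] s[OF _ a0] d unfolding \<tau>_def by auto
  qed
  have T2: "\<tau> a < n i \<and> h i $$ (\<tau> a, a) \<noteq> 0" if i: "i < d" and a: "a < r" for i a
  proof -
    have ai: "a < n i" using a rn i by auto
    have "s i a = \<tau> a" using T1[OF i a] s[OF i ai] by auto
    then show ?thesis using s[OF i ai] by auto
  qed
  have nonempty: "\<exists>k. k \<in> {..<d}-{m}" if "m < d" for m
  proof -
    have "\<exists>k\<in>{0,1::nat}. k \<noteq> m" by auto
    then obtain k where "k \<in> {0,1::nat}" "k \<noteq> m" by blast
    then show ?thesis using d by (intro exI[of _ k]) auto
  qed
  have indconst: "(\<Prod>i\<in>{..<d}-{m}. if (c::nat) = j then 1 else 0) = (if c = j then 1 else (0::real))"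
    if "m < d" for m c j
    using nonempty[OF that] by (auto simp: card_gt_0_iff)
  have Kc: "(if j < r then g m $$ (a,j) else 0) = (if a < r then (\<Prod>i\<in>{..<d}-{m}. h i $$ (j, a)) else 0)"
    if m: "m < d" and a: "a < n m" and j: "\<forall>i<d. j < n i" for m a j
  proof -
    have "(\<Sum>j'<r. g m $$ (a,j') * (\<Prod>i\<in>{..<d}-{m}. if j = j' then 1 else 0))
       = (if a < r then (\<Prod>i\<in>{..<d}-{m}. h i $$ (j, a)) else 0)"
      by (rule K[OF m a]) (use j in auto)
    moreover have "(\<Sum>j'<r. g m $$ (a,j') * (\<Prod>i\<in>{..<d}-{m}. if j = j' then 1 else 0))
        = (if j < r then g m $$ (a,j) else 0)"
      unfolding indconst[OF m] by (simp add: if_distrib sum.delta cong: if_cong)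
    ultimately show ?thesis by simp
  qed
  have taur: "\<tau> a < r" if a: "a < r" for a
  proof (rule ccontr)
    assume na: "\<not> \<tau> a < r"
    have "0 < d" using d by simp
    have a0: "a < n 0" using a rn[rule_format, of 0] rn[rule_format, of 1] d by auto
    have "(\<Prod>i\<in>{..<d}-{0}. h i $$ (\<tau> a, a)) \<noteq> 0"
      using T2 a by (subst prod_zero_iff) auto
    then show False using Kc[OF \<open>0<d\<close> a0, of "\<tau> a"] T2 a na by auto
  qed
  have Gnz: "g m $$ (a,j) \<noteq> 0 \<longleftrightarrow> a < r \<and> j = \<tau> a" if m: "m < d" and a: "a < n m" and j: "j < r" for m a j
  proof -
    have jn: "\<forall>i<d. j < n i" using j rn by auto
    have e: "g m $$ (a,j) = (if a < r then (\<Prod>i\<in>{..<d}-{m}. h i $$ (j, a)) else 0)"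
      using Kc[OF m a jn] j by simp
    show ?thesis
    proof (cases "a < r")
      case True
      have "(\<Prod>i\<in>{..<d}-{m}. h i $$ (j, a)) \<noteq> 0 \<longleftrightarrow> j = \<tau> a"
      proof
        assume "(\<Prod>i\<in>{..<d}-{m}. h i $$ (j, a)) \<noteq> 0"
        then have "\<forall>i\<in>{..<d}-{m}. h i $$ (j, a) \<noteq> 0" by (auto simp: prod_zero_iff)
        then show "j = \<tau> a" using nonempty[OF m] T1 True jn by auto
      next
        assume "j = \<tau> a"
        then show "(\<Prod>i\<in>{..<d}-{m}. h i $$ (j, a)) \<noteq> 0" using T2 True by (auto simp: prod_zero_iff)
      qed
      then show ?thesis using e True by simp
    next
      case False then show ?thesis using e by simp
    qed
  qed
  have inj: "inj_on \<tau> {..<r}"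
  proof (rule ccontr)
    assume ni: "\<not> inj_on \<tau> {..<r}"
    have sub: "\<tau> ` {..<r} \<subseteq> {..<r}" using taur by auto
    have "card (\<tau> ` {..<r}) \<noteq> card {..<r}" using ni inj_on_iff_eq_card[of "{..<r}" \<tau>] by auto
    then have "\<tau> ` {..<r} \<noteq> {..<r}" by metis
    then obtain j where j: "j < r" "j \<notin> \<tau> ` {..<r}" using sub by auto
    have "0 < d" using d by simp
    have jn: "j < n 0" using j rn[rule_format, of 0] d by auto
    have z: "g 0 $$ (x,j) = 0" if "x < n 0" for x
      using Gnz[OF \<open>0<d\<close> that j(1)] j(2) by auto
    have "(h 0 * g 0) $$ (j,j) = (\<Sum>x<n 0. h 0 $$ (j,x) * g 0 $$ (x,j))"
      using g h \<open>0<d\<close> jn by (intro mult_entry) auto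
    also have "\<dots> = 0" using z by simp
    finally show False using h \<open>0<d\<close> jn by auto
  qed
  show ?thesis using taur inj Gnz by blast
qed


lemma foldr_diag:
  assumes "\<forall>i\<in>set xs. D i \<in> carrier_mat r r \<and> diagonal_mat (D i)"
  shows "foldr (\<lambda>i P. D i * P) xs (1\<^sub>m r) =
     mat r r (\<lambda>(a,b). if a = b then prod_list (map (\<lambda>i. D i $$ (a,a)) xs) else (0::real))"
  using assms
proof (induction xs)
  case Nil
  then show ?case by (intro eq_matI) auto
next
  case (Cons x xs)
  let ?M = "mat r r (\<lambda>(a,b). if a = b then prod_list (map (\<lambda>i. D i $$ (a,a)) xs) else (0::real))"
  have IH: "foldr (\<lambda>i P. D i * P) xs (1\<^sub>m r) = ?M" using Cons by auto
  have Dx: "D x \<in> carrier_mat r r" "diagonal_mat (D x)" using Cons.prems by auto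
  show ?case
  proof (simp only: foldr.simps comp_def IH, intro eq_matI)
    fix a b assume ab: "a < dim_row (mat r r (\<lambda>(a,b). if a = b then prod_list (map (\<lambda>i. D i $$ (a,a)) (x#xs)) else (0::real)))"
      "b < dim_col (mat r r (\<lambda>(a,b). if a = b then prod_list (map (\<lambda>i. D i $$ (a,a)) (x#xs)) else (0::real)))"
    then have ab': "a < r" "b < r" by auto
    have "(D x * ?M) $$ (a,b) = (\<Sum>k<r. D x $$ (a,k) * ?M $$ (k,b))"
      using Dx ab' by (intro mult_entry) auto
    also have "\<dots> = (\<Sum>k<r. if k = b then D x $$ (a,b) * prod_list (map (\<lambda>i. D i $$ (b,b)) xs) else 0)"
      using ab' by (intro sum.cong) auto
    also have "\<dots> = D x $$ (a,b) * prod_list (map (\<lambda>i. D i $$ (b,b)) xs)"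
      using ab' by simp
    also have "\<dots> = (if a = b then prod_list (map (\<lambda>i. D i $$ (a,a)) (x#xs)) else 0)"
      using Dx ab' unfolding diagonal_mat_def by auto
    finally show "(D x * ?M) $$ (a,b) = mat r r (\<lambda>(a,b). if a = b then prod_list (map (\<lambda>i. D i $$ (a,a)) (x#xs)) else (0::real)) $$ (a,b)"
      using ab' by simp
  qed (use Dx in auto)
qed

lemma prod_list_upt: "prod_list (map f [0..<d]) = (\<Prod>i<d. (f i :: real))"
  by (induction d) auto


lemma forward:
  fixes d r :: nat and n :: "nat \<Rightarrow> nat" and g :: "nat \<Rightarrow> real mat"
  assumes d: "d \<ge> 3" and rn: "\<forall>i<d. r \<le> n i"
    and g: "\<forall>i<d. g i \<in> carrier_mat (n i) (n i)"
    and inv: "\<forall>i<d. invertible_mat (g i)"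
    and stab: "\<forall>a\<in>tidx d n. tact d n g (diag_tensor d r) a = diag_tensor d r a"
  shows "\<exists>D Q A M.
        (\<forall>i<d. D i \<in> carrier_mat r r \<and> diagonal_mat (D i) \<and> invertible_mat (D i)) \<and>
        foldr (\<lambda>i P. D i * P) [0..<d] (1\<^sub>m r) = 1\<^sub>m r \<and>
        permutation_mat r Q \<and>
        (\<forall>i<d. A i \<in> carrier_mat (n i - r) (n i - r) \<and> invertible_mat (A i) \<and>
               M i \<in> carrier_mat r (n i - r) \<and>
               g i = four_block_mat (D i * Q) (M i) (0\<^sub>m (n i - r) r) (A i))"
proof -
  have d1: "d \<ge> 1" using d by simp
  have "\<forall>i. \<exists>B. i < d \<longrightarrow> (B \<in> carrier_mat (n i) (n i) \<and> g i * B = 1\<^sub>m (n i) \<and> B * g i = 1\<^sub>m (n i))"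
    using inv_ex g inv by blast
  then obtain h where h0: "\<forall>i. i < d \<longrightarrow> (h i \<in> carrier_mat (n i) (n i) \<and> g i * h i = 1\<^sub>m (n i) \<and> h i * g i = 1\<^sub>m (n i))"
    using choice[of "\<lambda>i B. i < d \<longrightarrow> (B \<in> carrier_mat (n i) (n i) \<and> g i * B = 1\<^sub>m (n i) \<and> B * g i = 1\<^sub>m (n i))"] by blast
  have h: "\<forall>i<d. h i \<in> carrier_mat (n i) (n i) \<and> h i * g i = 1\<^sub>m (n i) \<and> g i * h i = 1\<^sub>m (n i)"
    using h0 by auto
  obtain \<tau> where tr: "\<forall>a<r. \<tau> a < r" and tinj: "inj_on \<tau> {..<r}"
    and G: "\<forall>m<d. \<forall>a<n m. \<forall>j<r. (g m $$ (a,j) \<noteq> 0 \<longleftrightarrow> a < r \<and> j = \<tau> a)"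
    using structure_lemma[OF d rn stab g h] by blast
  have rle: "a < r \<Longrightarrow> i < d \<Longrightarrow> a < n i" for a i using rn by (meson order_less_le_trans)
  define \<tau>' where "\<tau>' = (\<lambda>a. if a < r then \<tau> a else a)"
  have bij: "bij_betw \<tau>' {..<r} {..<r}"
  proof -
    have "inj_on \<tau>' {..<r}" using tinj unfolding \<tau>'_def inj_on_def by auto
    moreover have "\<tau>' ` {..<r} \<subseteq> {..<r}" using tr unfolding \<tau>'_def by auto
    ultimately show ?thesis by (simp add: bij_betw_def card_subset_eq card_image)
  qed
  have perm: "\<tau>' permutes {..<r}" by (rule bij_imp_permutes[OF bij]) (auto simp: \<tau>'_def)
  define \<sigma> where "\<sigma> = inv_into UNIV \<tau>'"
  have sperm: "\<sigma> permutes {..<r}" unfolding \<sigma>_def by (rule permutes_inv[OF perm])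
  define Q where "Q = mat r r (\<lambda>(a,j). if \<tau> a = j then 1 else (0::real))"
  have Qp: "permutation_mat r Q"
    unfolding permutation_mat_def
  proof (intro conjI exI[of _ \<sigma>])
    show "Q \<in> carrier_mat r r" unfolding Q_def by simp
    show "\<sigma> permutes {..<r}" by (rule sperm)
    show "\<forall>i<r. \<forall>j<r. Q $$ (i, j) = (if \<sigma> j = i then 1 else 0)"
      unfolding Q_def \<sigma>_def using permutes_inv_eq[OF perm] by (auto simp: \<tau>'_def)
  qed
  define D where "D = (\<lambda>i. mat r r (\<lambda>(a,b). if a = b then g i $$ (a, \<tau> a) else (0::real)))"
  define M where "M = (\<lambda>i. mat r (n i - r) (\<lambda>(a,b). g i $$ (a, b + r)))"
  define A where "A = (\<lambda>i. mat (n i - r) (n i - r) (\<lambda>(a,b). g i $$ (a + r, b + r)))"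
  have Dnz: "g i $$ (a, \<tau> a) \<noteq> 0" if "i < d" "a < r" for i a
    using G that tr rle by auto
  have Dc: "D i \<in> carrier_mat r r \<and> diagonal_mat (D i)" for i
    unfolding D_def diagonal_mat_def by auto
  have Dinv: "invertible_mat (D i)" if i: "i < d" for i
  proof (rule det_inv[of _ r])
    show "D i \<in> carrier_mat r r" using Dc by auto
    have "upper_triangular (D i)" unfolding D_def upper_triangular_def by auto
    then have "det (D i) = prod_list (diag_mat (D i))" using Dc det_upper_triangular by blast
    moreover have "0 \<notin> set (diag_mat (D i))" using Dnz[OF i] unfolding diag_mat_def D_def by auto
    ultimately show "det (D i) \<noteq> 0" by (simp add: prod_list_zero_iff)
  qed
  have prod1: "(\<Prod>i<d. g i $$ (a, \<tau> a)) = 1" if a: "a < r" for a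
  proof -
    define c where "c = (\<lambda>i. if i < d then a else undefined)"
    have ct: "c \<in> tidx d n" unfolding tidx_def c_def using rle a by (auto simp: PiE_def extensional_def)
    have "diag_tensor d r c = 1" unfolding diag_tensor_def c_def using a by auto
    then have "tact d n g (diag_tensor d r) c = 1" using stab ct by simp
    then have "(\<Sum>j<r. \<Prod>i<d. g i $$ (c i, j)) = 1" using tact_diag[OF d1 rn] by simp
    moreover have "(\<Sum>j<r. \<Prod>i<d. g i $$ (c i, j)) = (\<Sum>j<r. if j = \<tau> a then (\<Prod>i<d. g i $$ (a, \<tau> a)) else 0)"
    proof (rule sum.cong[OF refl])
      fix j assume j: "j \<in> {..<r}"
      have "(\<Prod>i<d. g i $$ (c i, j)) = (\<Prod>i<d. g i $$ (a, j))" unfolding c_def by (rule prod.cong) auto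
      moreover have "j \<noteq> \<tau> a \<Longrightarrow> (\<Prod>i<d. g i $$ (a, j)) = 0"
      proof -
        assume ne: "j \<noteq> \<tau> a"
        have "0 < d" using d1 by simp
        have "g 0 $$ (a, j) = 0" using G[rule_format, OF \<open>0<d\<close> rle[OF a \<open>0<d\<close>]] j ne by auto
        then show ?thesis using \<open>0<d\<close> by (subst prod_zero_iff) auto
      qed
      ultimately show "(\<Prod>i<d. g i $$ (c i, j)) = (if j = \<tau> a then (\<Prod>i<d. g i $$ (a, \<tau> a)) else 0)"
        by auto
    qed
    ultimately show ?thesis using tr a by simp
  qed
  have fold: "foldr (\<lambda>i P. D i * P) [0..<d] (1\<^sub>m r) = 1\<^sub>m r"
    using Dc by (subst foldr_diag) (auto intro!: eq_matI simp: prod_list_upt D_def prod1)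
  have blk: "g i = four_block_mat (D i * Q) (M i) (0\<^sub>m (n i - r) r) (A i)" if i: "i < d" for i
  proof -
    have ni: "r \<le> n i" using rn i by auto
    have gi: "g i \<in> carrier_mat (n i) (n i)" using g i by auto
    have DQ: "(D i * Q) $$ (a,b) = g i $$ (a,b)" if ab: "a < r" "b < r" for a b
    proof -
      have "(D i * Q) $$ (a,b) = (\<Sum>k<r. D i $$ (a,k) * Q $$ (k,b))"
        using ab by (intro mult_entry) (auto simp: D_def Q_def)
      also have "\<dots> = (\<Sum>k<r. if k = a then g i $$ (a, \<tau> a) * (if \<tau> a = b then 1 else 0) else 0)"
        using ab by (intro sum.cong) (auto simp: D_def Q_def)
      also have "\<dots> = g i $$ (a, \<tau> a) * (if \<tau> a = b then 1 else 0)" using ab by simp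
      also have "\<dots> = g i $$ (a,b)" using G i ab rle by (cases "\<tau> a = b") auto
      finally show ?thesis .
    qed
    have low: "g i $$ (a,b) = 0" if "r \<le> a" "a < n i" "b < r" for a b
      using G[rule_format, OF i that(2) that(3)] that(1) by auto
    show ?thesis
    proof (rule eq_matI)
      show "dim_row (g i) = dim_row (four_block_mat (D i * Q) (M i) (0\<^sub>m (n i - r) r) (A i))"
        using gi ni by (simp add: D_def A_def)
      show "dim_col (g i) = dim_col (four_block_mat (D i * Q) (M i) (0\<^sub>m (n i - r) r) (A i))"
        using gi ni by (simp add: Q_def M_def A_def)
      fix a b assume ab: "a < dim_row (four_block_mat (D i * Q) (M i) (0\<^sub>m (n i - r) r) (A i))"
        "b < dim_col (four_block_mat (D i * Q) (M i) (0\<^sub>m (n i - r) r) (A i))"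
      then have ab': "a < n i" "b < n i" using ni by (auto simp: D_def Q_def M_def A_def)
      have dq: "dim_row (D i * Q) = r" "dim_col (D i * Q) = r" "dim_row (A i) = n i - r" "dim_col (A i) = n i - r" "dim_row (D i) = r" "dim_col Q = r"
        by (auto simp: D_def Q_def A_def)
      have e: "four_block_mat (D i * Q) (M i) (0\<^sub>m (n i - r) r) (A i) $$ (a,b) =
        (if a < r then if b < r then (D i * Q) $$ (a,b) else M i $$ (a, b - r)
         else if b < r then 0\<^sub>m (n i - r) r $$ (a - r, b) else A i $$ (a - r, b - r))"
        using ab' ni by (subst index_mat_four_block) (simp_all add: dq)
      show "g i $$ (a,b) = four_block_mat (D i * Q) (M i) (0\<^sub>m (n i - r) r) (A i) $$ (a,b)"
      proof (cases "a < r"; cases "b < r")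
        assume "a < r" "b < r" then show ?thesis using DQ by (simp add: e)
      next
        assume "a < r" "\<not> b < r" then show ?thesis using ab' unfolding e by (simp add: M_def)
      next
        assume "\<not> a < r" "b < r" then show ?thesis using ab' low by (simp add: e)
      next
        assume "\<not> a < r" "\<not> b < r" then show ?thesis using ab' unfolding e by (simp add: A_def)
      qed
    qed
  qed
  have Ainv: "invertible_mat (A i)" if i: "i < d" for i
  proof (rule det_inv[of _ "n i - r"])
    show Ac: "A i \<in> carrier_mat (n i - r) (n i - r)" unfolding A_def by simp
    have "det (g i) \<noteq> 0" using inv_det g inv i by blast
    moreover have "det (g i) = det (D i * Q) * det (A i)"
      unfolding blk[OF i] by (rule det_four_block_mat_lower_left_zero[OF _ _ refl Ac])
         (auto simp: D_def Q_def M_def)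
    ultimately show "det (A i) \<noteq> 0" by auto
  qed
  show ?thesis
    apply (rule exI[of _ D], rule exI[of _ Q], rule exI[of _ A], rule exI[of _ M])
  proof (intro conjI allI impI)
    show "\<And>i. A i \<in> carrier_mat (n i - r) (n i - r)" "\<And>i. M i \<in> carrier_mat r (n i - r)"
      unfolding A_def M_def by auto
  qed (use Dc Dinv fold Qp Ainv blk in blast)+
qed


lemma backward:
  fixes d r :: nat and n :: "nat \<Rightarrow> nat" and g :: "nat \<Rightarrow> real mat"
  assumes d: "d \<ge> 1" and rn: "\<forall>i<d. r \<le> n i"
    and g: "\<forall>i<d. g i \<in> carrier_mat (n i) (n i)"
    and Dp: "\<forall>i<d. D i \<in> carrier_mat r r \<and> diagonal_mat (D i) \<and> invertible_mat (D i)"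
    and fold: "foldr (\<lambda>i P. D i * P) [0..<d] (1\<^sub>m r) = 1\<^sub>m r"
    and Qp: "permutation_mat r Q"
    and blk: "\<forall>i<d. A i \<in> carrier_mat (n i - r) (n i - r) \<and> invertible_mat (A i) \<and>
               M i \<in> carrier_mat r (n i - r) \<and>
               g i = four_block_mat (D i * Q) (M i) (0\<^sub>m (n i - r) r) (A i)"
  shows "(\<forall>i<d. invertible_mat (g i)) \<and>
          (\<forall>a\<in>tidx d n. tact d n g (diag_tensor d r) a = diag_tensor d r a)"
proof -
  obtain \<sigma> where Qc: "Q \<in> carrier_mat r r" and sp: "\<sigma> permutes {..<r}"
    and Qe: "\<forall>i<r. \<forall>j<r. Q $$ (i, j) = (if \<sigma> j = i then 1 else 0)"
    using Qp unfolding permutation_mat_def by blast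
  have sr: "j < r \<Longrightarrow> \<sigma> j < r" for j using permutes_in_image[OF sp] by auto
  have QtQ: "transpose_mat Q * Q = 1\<^sub>m r"
  proof (rule eq_matI)
    fix a b assume ab: "a < dim_row (1\<^sub>m r)" "b < dim_col (1\<^sub>m r)"
    then have ab': "a < r" "b < r" by auto
    have "(transpose_mat Q * Q) $$ (a,b) = (\<Sum>k<r. transpose_mat Q $$ (a,k) * Q $$ (k,b))"
      using Qc ab' by (intro mult_entry) auto
    also have "\<dots> = (\<Sum>k<r. if k = \<sigma> a then (if \<sigma> b = k then 1 else 0) else 0)"
      using Qc Qe ab' by (intro sum.cong) auto
    also have "\<dots> = (if \<sigma> b = \<sigma> a then 1 else 0)" using sr ab' by simp
    also have "\<dots> = 1\<^sub>m r $$ (a,b)" using ab' permutes_inj[OF sp] by (auto simp: inj_eq)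
    finally show "(transpose_mat Q * Q) $$ (a,b) = 1\<^sub>m r $$ (a,b)" .
  qed (use Qc in auto)
  have detQ: "det Q \<noteq> 0"
  proof -
    have "det (transpose_mat Q) * det Q = 1"
      using det_mult[of "transpose_mat Q" r Q] Qc QtQ by simp
    then show ?thesis by auto
  qed
  have inv: "invertible_mat (g i)" if i: "i < d" for i
  proof (rule det_inv[of _ "n i"])
    show gi: "g i \<in> carrier_mat (n i) (n i)" using g i by auto
    have Di: "D i \<in> carrier_mat r r" "invertible_mat (D i)" using Dp i by auto
    have Ai: "A i \<in> carrier_mat (n i - r) (n i - r)" "invertible_mat (A i)" "M i \<in> carrier_mat r (n i - r)"
      using blk i by auto
    have "det (g i) = det (D i * Q) * det (A i)"
    proof -
      have ge: "g i = four_block_mat (D i * Q) (M i) (0\<^sub>m (n i - r) r) (A i)" using blk i by auto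
      show ?thesis unfolding ge
        by (rule det_four_block_mat_lower_left_zero[OF mult_carrier_mat[OF Di(1) Qc] Ai(3) refl Ai(1)])
    qed
    also have "\<dots> = det (D i) * det Q * det (A i)" using det_mult[OF Di(1) Qc] by simp
    finally show "det (g i) \<noteq> 0" using inv_det[OF Di] inv_det[OF Ai(1,2)] detQ by simp
  qed
  have entry: "g i $$ (x,j) = (if x = \<sigma> j then D i $$ (\<sigma> j, \<sigma> j) else 0)"
    if i: "i < d" and x: "x < n i" and j: "j < r" for i x j
  proof -
    have Di: "D i \<in> carrier_mat r r" "diagonal_mat (D i)" using Dp i by auto
    have Ai: "A i \<in> carrier_mat (n i - r) (n i - r)" "M i \<in> carrier_mat r (n i - r)"
      using blk i by auto
    have ge: "g i = four_block_mat (D i * Q) (M i) (0\<^sub>m (n i - r) r) (A i)" using blk i by auto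
    have ni: "r \<le> n i" using rn i by auto
    have dq: "dim_row (D i) = r" "dim_col Q = r" "dim_row (A i) = n i - r" "dim_col (A i) = n i - r"
      using Di Qc Ai by auto
    have e: "g i $$ (x,j) = (if x < r then (D i * Q) $$ (x,j) else 0)"
      unfolding ge using x j ni by (subst index_mat_four_block) (simp_all add: dq)
    show ?thesis
    proof (cases "x < r")
      case True
      have "(D i * Q) $$ (x,j) = (\<Sum>k<r. D i $$ (x,k) * Q $$ (k,j))"
        using Di Qc True j by (intro mult_entry) auto
      also have "\<dots> = (\<Sum>k<r. if k = x then D i $$ (x,x) * Q $$ (x,j) else 0)"
        using Di True unfolding diagonal_mat_def by (intro sum.cong) auto
      also have "\<dots> = D i $$ (x,x) * Q $$ (x,j)" using True by simp
      finally show ?thesis using e True Qe j by auto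
    next
      case False
      then show ?thesis using e sr j by auto
    qed
  qed
  have prodD: "(\<Prod>i<d. D i $$ (k,k)) = 1" if k: "k < r" for k
  proof -
    have "foldr (\<lambda>i P. D i * P) [0..<d] (1\<^sub>m r) $$ (k,k) = 1" using fold k by simp
    then show ?thesis using Dp k by (subst (asm) foldr_diag) (auto simp: prod_list_upt)
  qed
  have stab: "tact d n g (diag_tensor d r) a = diag_tensor d r a" if a: "a \<in> tidx d n" for a
  proof -
    have an: "\<forall>i<d. a i < n i" using a unfolding tidx_def by auto
    have P: "(\<Prod>i<d. g i $$ (a i, j)) = (if \<forall>i<d. a i = \<sigma> j then 1 else 0)" if j: "j < r" for j
    proof -
      have "(\<Prod>i<d. g i $$ (a i, j)) = (\<Prod>i<d. if a i = \<sigma> j then D i $$ (\<sigma> j, \<sigma> j) else 0)"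
        using entry an j by (intro prod.cong) auto
      also have "\<dots> = (if \<forall>i<d. a i = \<sigma> j then 1 else 0)"
      proof (cases "\<forall>i<d. a i = \<sigma> j")
        case True
        then show ?thesis using prodD[OF sr[OF j]] by simp
      next
        case False
        then obtain i where i: "i < d" "a i \<noteq> \<sigma> j" by auto
        have z: "(\<Prod>i<d. if a i = \<sigma> j then D i $$ (\<sigma> j, \<sigma> j) else 0) = 0"
          using i by (intro prod_zero) auto
        show ?thesis by (subst if_not_P[OF False]) (rule z)
      qed
      finally show ?thesis .
    qed
    have "tact d n g (diag_tensor d r) a = (\<Sum>j<r. if \<forall>i<d. a i = \<sigma> j then 1 else 0)"
      using tact_diag[OF d rn] P by simp
    also have "\<dots> = diag_tensor d r a"
    proof (cases "\<exists>k<r. \<forall>i<d. a i = k")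
      case True
      then obtain k where k: "k < r" "\<forall>i<d. a i = k" by auto
      have "(\<Sum>j<r. if \<forall>i<d. a i = \<sigma> j then 1 else 0) = (\<Sum>j<r. if j = inv_into UNIV \<sigma> k then 1 else (0::real))"
      proof (rule sum.cong[OF refl])
        fix j assume j: "j \<in> {..<r}"
        have "(\<forall>i<d. a i = \<sigma> j) \<longleftrightarrow> \<sigma> j = k" using k d by (auto simp: Suc_le_eq)
        also have "\<dots> \<longleftrightarrow> j = inv_into UNIV \<sigma> k" using permutes_inv_eq[OF sp] by metis
        finally show "(if \<forall>i<d. a i = \<sigma> j then 1 else 0) = (if j = inv_into UNIV \<sigma> k then 1 else (0::real))"
          by simp
      qed
      also have "\<dots> = 1"
      proof -
        have "inv_into UNIV \<sigma> k < r"
          using permutes_in_image[OF permutes_inv[OF sp]] k by auto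
        then show ?thesis by simp
      qed
      finally show ?thesis unfolding diag_tensor_def using True by simp
    next
      case False
      have "(\<Sum>j<r. if \<forall>i<d. a i = \<sigma> j then 1 else (0::real)) = 0"
        using False sr by (intro sum.neutral) auto
      then show ?thesis unfolding diag_tensor_def using False by simp
    qed
    finally show ?thesis .
  qed
  show ?thesis using inv stab by auto
qed

theorem mainTheorem3:
  fixes d r :: nat and n :: "nat \<Rightarrow> nat" and g :: "nat \<Rightarrow> real mat"
  assumes "d \<ge> 3" and "\<forall>i<d. n i \<ge> 2"
    and "r \<ge> 1" and "\<forall>i<d. r \<le> n i"
    and "\<forall>i<d. g i \<in> carrier_mat (n i) (n i)"
  shows "((\<forall>i<d. invertible_mat (g i)) \<and>
          (\<forall>a\<in>tidx d n. tact d n g (diag_tensor d r) a = diag_tensor d r a))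
     \<longleftrightarrow>
     (\<exists>D Q A M.
        (\<forall>i<d. D i \<in> carrier_mat r r \<and> diagonal_mat (D i) \<and> invertible_mat (D i)) \<and>
        foldr (\<lambda>i P. D i * P) [0..<d] (1\<^sub>m r) = 1\<^sub>m r \<and>
        permutation_mat r Q \<and>
        (\<forall>i<d. A i \<in> carrier_mat (n i - r) (n i - r) \<and> invertible_mat (A i) \<and>
               M i \<in> carrier_mat r (n i - r) \<and>
               g i = four_block_mat (D i * Q) (M i) (0\<^sub>m (n i - r) r) (A i)))"
proof
  assume L: "(\<forall>i<d. invertible_mat (g i)) \<and>
          (\<forall>a\<in>tidx d n. tact d n g (diag_tensor d r) a = diag_tensor d r a)"
  show "\<exists>D Q A M.
        (\<forall>i<d. D i \<in> carrier_mat r r \<and> diagonal_mat (D i) \<and> invertible_mat (D i)) \<and>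
        foldr (\<lambda>i P. D i * P) [0..<d] (1\<^sub>m r) = 1\<^sub>m r \<and>
        permutation_mat r Q \<and>
        (\<forall>i<d. A i \<in> carrier_mat (n i - r) (n i - r) \<and> invertible_mat (A i) \<and>
               M i \<in> carrier_mat r (n i - r) \<and>
               g i = four_block_mat (D i * Q) (M i) (0\<^sub>m (n i - r) r) (A i))"
    using forward[OF assms(1) assms(4) assms(5)] L by blast
next
  assume R: "\<exists>D Q A M.
        (\<forall>i<d. D i \<in> carrier_mat r r \<and> diagonal_mat (D i) \<and> invertible_mat (D i)) \<and>
        foldr (\<lambda>i P. D i * P) [0..<d] (1\<^sub>m r) = 1\<^sub>m r \<and>
        permutation_mat r Q \<and>
        (\<forall>i<d. A i \<in> carrier_mat (n i - r) (n i - r) \<and> invertible_mat (A i) \<and>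
               M i \<in> carrier_mat r (n i - r) \<and>
               g i = four_block_mat (D i * Q) (M i) (0\<^sub>m (n i - r) r) (A i))"
  have d1: "d \<ge> 1" using assms(1) by simp
  from R obtain D Q A M where
    "\<forall>i<d. D i \<in> carrier_mat r r \<and> diagonal_mat (D i) \<and> invertible_mat (D i)"
    "foldr (\<lambda>i P. D i * P) [0..<d] (1\<^sub>m r) = 1\<^sub>m r" "permutation_mat r Q"
    "\<forall>i<d. A i \<in> carrier_mat (n i - r) (n i - r) \<and> invertible_mat (A i) \<and>
               M i \<in> carrier_mat r (n i - r) \<and>
               g i = four_block_mat (D i * Q) (M i) (0\<^sub>m (n i - r) r) (A i)"
    by blast
  then show "(\<forall>i<d. invertible_mat (g i)) \<and>
          (\<forall>a\<in>tidx d n. tact d n g (diag_tensor d r) a = diag_tensor d r a)"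
    using backward[OF d1 assms(4) assms(5)] by blast
qed

end
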